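(* For every $\lambda>0$, the function $\tilde J_\lambda$, taking values in the extended reals $\mathbb R\cup\{+\infty\}$, is lower semicontinuous on $\overline{\mathfrak B_+^o}\times\overline{\mathfrak B_+^m}(E)$.
   Context: Let $m,n$ be positive integers, $V=\{1,\dots,m\}$, and $E\subseteq V\times V$ a symmetric set containing $(j,j)$ for all $j\in V$. Let $\mathbb T=[0,2\pi)$ and write $\int_{\mathbb T}f$ for $\int_0^{2\pi}f(\theta)\,\frac{d\theta}{2\pi}$. $\mathfrak B_+^m(E)$ is the set of matrix trigonometric polynomials $\mathbf Q(e^{i\theta})=Q_0+\frac12\sum_{k=1}^n\big(Q_ke^{-i\theta k}+Q_k^Te^{i\theta k}\big)$ with $Q_0\in\mathbb R^{m\times m}$ symmetric, $Q_1,\dots,Q_n\in\mathbb R^{m\times m}$, $[Q_k]_{jh}=0$ for all $k$ and all $(j,h)\notin E$, and $\mathbf Q(e^{i\theta})$ positive definite for every $\theta\in\mathbb T$. $\overline{\mathfrak B_+^m}(E)$ denotes the closure of $\mathfrak B_+^m(E)$ (in the finite-dimensional coefficient space) from which the points $\mathbf Q$ with $\det\mathbf Q(e^{i\theta})=0$ for all $\theta\in\mathbb T$ are removed. $\mathfrak B_+^o$ is the set of scalar trigonometric polynomials $\mathbf p(e^{i\theta})=1+\frac12\sum_{k=1}^n p_k(e^{-i\theta k}+e^{i\theta k})$, $p_k\in\mathbb R$, with $\mathbf p(e^{i\theta})>0$ for all $\theta$; $\overline{\mathfrak B_+^o}$ is its closure. Set $p_0=1$. Data: real $m\times m$ matrices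 $R_0,\dots,R_n$ ($R_0$ symmetric) and real numbers $c_0,\dots,c_n$. Define $$J(\mathbf p,\mathbf Q)=\int_{\mathbb T}\Big(\mathbf p\log\det(\mathbf p\mathbf Q^{-1})-m\mathbf p\Big)+\sum_{k=0}^n\mathrm{tr}(Q_k^TR_k)-\sum_{k=0}^np_kc_k,$$ $g_\lambda(\mathbf p)=\lambda\int_{\mathbb T}\mathbf p^{-1}$, and $\tilde J_\lambda=J+g_\lambda$ (integrals possibly equal to $+\infty$). *)

theory Defs
  imports "HOL-Analysis.Analysis"
begin

text \<open>Coefficients are represented as sequences indexed by nat; only the indices
  0..n are meaningful, the others are required to vanish.  The ambient space
  nat => ... carries the product topology (pointwise convergence), which on the
  subspace of sequences vanishing beyond n is the usual Euclidean topology.\<close>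

definition trig_p :: "nat \<Rightarrow> (nat \<Rightarrow> real) \<Rightarrow> real \<Rightarrow> real" where
  "trig_p n p \<theta> = Re (complex_of_real (p 0) + (1/2) * (\<Sum>k\<in>{1..n}.
       complex_of_real (p k) * (exp (- \<i> * of_nat k * of_real \<theta>) + exp (\<i> * of_nat k * of_real \<theta>))))"

definition trig_Q :: "nat \<Rightarrow> (nat \<Rightarrow> real^'m^'m) \<Rightarrow> real \<Rightarrow> complex^'m^'m" where
  "trig_Q n Q \<theta> = (\<chi> j h. complex_of_real (Q 0 $ j $ h) + (1/2) * (\<Sum>k\<in>{1..n}.
       complex_of_real (Q k $ j $ h) * exp (- \<i> * of_nat k * of_real \<theta>)
     + complex_of_real (transpose (Q k) $ j $ h) * exp (\<i> * of_nat k * of_real \<theta>)))"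

definition pos_def_cmat :: "complex^'m^'m \<Rightarrow> bool" where
  "pos_def_cmat A \<longleftrightarrow> (\<forall>z::complex^'m. z \<noteq> 0 \<longrightarrow>
     (let q = (\<Sum>j\<in>UNIV. \<Sum>h\<in>UNIV. cnj (z $ j) * A $ j $ h * z $ h) in Im q = 0 \<and> Re q > 0))"

definition Bo :: "nat \<Rightarrow> (nat \<Rightarrow> real) set" where
  "Bo n = {p. p 0 = 1 \<and> (\<forall>k>n. p k = 0) \<and> (\<forall>\<theta>\<in>{0..<2*pi}. trig_p n p \<theta> > 0)}"

definition Bm :: "nat \<Rightarrow> ('m \<times> 'm) set \<Rightarrow> (nat \<Rightarrow> real^'m^'m) set" where
  "Bm n E = {Q. transpose (Q 0) = Q 0 \<and> (\<forall>k>n. Q k = 0)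
      \<and> (\<forall>k j h. (j, h) \<notin> E \<longrightarrow> Q k $ j $ h = 0)
      \<and> (\<forall>\<theta>\<in>{0..<2*pi}. pos_def_cmat (trig_Q n Q \<theta>))}"

definition Bo_bar :: "nat \<Rightarrow> (nat \<Rightarrow> real) set" where
  "Bo_bar n = closure (Bo n)"

definition Bm_bar :: "nat \<Rightarrow> ('m \<times> 'm) set \<Rightarrow> (nat \<Rightarrow> real^'m^'m) set" where
  "Bm_bar n E = closure (Bm n E) - {Q. \<forall>\<theta>\<in>{0..<2*pi}. det (trig_Q n Q \<theta>) = 0}"

text \<open>Normalized integral over T = [0,2pi) with respect to d theta / (2 pi) of an extended-real
  valued function, defined as (positive part) - (negative part) in the extended reals.
  (For the integrands below the negative part is finite, so the value lies in R \<union> {+\<infinity>}.)\<close>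
definition intT :: "(real \<Rightarrow> ereal) \<Rightarrow> ereal" where
  "intT f = ereal (1 / (2*pi)) *
     (enn2ereal (\<integral>\<^sup>+ \<theta>\<in>{0..<2*pi}. e2ennreal (max 0 (f \<theta>)) \<partial>lborel)
    - enn2ereal (\<integral>\<^sup>+ \<theta>\<in>{0..<2*pi}. e2ennreal (max 0 (- f \<theta>)) \<partial>lborel))"

text \<open>Integrand p log det(p Q^{-1}) - m p.  Where p(e^{i theta}) > 0 and Q(e^{i theta}) is
  invertible this is the literal formula; at the finitely many remaining points (a null set,
  so the choice does not affect the integral) we use the conventions 0 log(...) = 0 and
  log det(p Q^{-1}) = +\<infinity> when det Q = 0.\<close>
definition J_integrand :: "nat \<Rightarrow> (nat \<Rightarrow> real) \<Rightarrow> (nat \<Rightarrow> real^'m^'m) \<Rightarrow> real \<Rightarrow> ereal" where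
  "J_integrand n p Q \<theta> =
     (let pt = trig_p n p \<theta>; Qt = trig_Q n Q \<theta>; m = real CARD('m) in
      if pt > 0 \<and> det Qt \<noteq> 0 then
        ereal (pt * ln (Re (det (mat (complex_of_real pt) ** matrix_inv Qt))) - m * pt)
      else if pt = 0 then 0 else PInfty)"

definition J_fun :: "nat \<Rightarrow> (nat \<Rightarrow> real^'m^'m) \<Rightarrow> (nat \<Rightarrow> real)
    \<Rightarrow> (nat \<Rightarrow> real) \<Rightarrow> (nat \<Rightarrow> real^'m^'m) \<Rightarrow> ereal" where
  "J_fun n R c p Q = intT (J_integrand n p Q)
     + ereal (\<Sum>k\<in>{0..n}. trace (transpose (Q k) ** R k)) - ereal (\<Sum>k\<in>{0..n}. p k * c k)"

definition g_fun :: "nat \<Rightarrow> real \<Rightarrow> (nat \<Rightarrow> real) \<Rightarrow> ereal" where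
  "g_fun n lam p = ereal lam * intT (\<lambda>\<theta>. if trig_p n p \<theta> > 0 then ereal (1 / trig_p n p \<theta>) else PInfty)"

definition J_tilde :: "nat \<Rightarrow> (nat \<Rightarrow> real^'m^'m) \<Rightarrow> (nat \<Rightarrow> real) \<Rightarrow> real
    \<Rightarrow> (nat \<Rightarrow> real) \<times> (nat \<Rightarrow> real^'m^'m) \<Rightarrow> ereal" where
  "J_tilde n R c lam pQ = J_fun n R c (fst pQ) (snd pQ) + g_fun n lam (fst pQ)"

definition lsc_on :: "'a::topological_space set \<Rightarrow> ('a \<Rightarrow> 'b::linorder) \<Rightarrow> bool" where
  "lsc_on S f \<longleftrightarrow> (\<forall>a. openin (top_of_set S) {x\<in>S. a < f x})"

end

theory Submission
  imports Defs
begin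

definition herm :: "complex^'m^'m \<Rightarrow> bool" where
  "herm A \<longleftrightarrow> (\<forall>i j. A$i$j = cnj (A$j$i))"

lemma det_cnj: "det (\<chi> i j. cnj (A$i$j)) = cnj (det (A::complex^'m^'m))"
  unfolding det_def by simp

lemma herm_det_real:
  assumes "herm A" shows "Im (det A) = 0"
proof -
  have h: "cnj (A$i$j) = A$j$i" for i j
    using assms unfolding herm_def by (metis complex_cnj_cnj)
  have "(\<chi> i j. cnj (A$i$j)) = transpose A"
    unfolding transpose_def by (simp only: h)
  then have "cnj (det A) = det A" using det_cnj[of A] by simp
  then show ?thesis by (metis Reals_cnj_iff complex_is_Real_iff)
qed

lemma pd_det_nz:
  fixes A :: "complex^'m^'m"
  assumes "pos_def_cmat A" shows "det A \<noteq> 0"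
proof
  assume "det A = 0"
  then have "\<not> invertible A" using invertible_det_nz by blast
  then have "\<not> (\<exists>B. B ** A = mat 1)" using invertible_left_inverse by blast
  then obtain z where z: "A *v z = 0" "z \<noteq> 0" using matrix_left_invertible_ker by blast
  have "(\<Sum>j\<in>UNIV. \<Sum>h\<in>UNIV. cnj (z $ j) * A $ j $ h * z $ h)
      = (\<Sum>j\<in>UNIV. cnj (z $ j) * (A *v z) $ j)"
    by (simp add: matrix_vector_mult_def sum_distrib_left mult.assoc)
  also have "\<dots> = 0" using z by simp
  moreover have "0 < Re (\<Sum>j\<in>UNIV. \<Sum>h\<in>UNIV. cnj (z $ j) * A $ j $ h * z $ h)"
    using assms z(2) unfolding pos_def_cmat_def Let_def by blast
  ultimately show False by simp
qed

lemma det_mat_scalar: "det (mat c :: 'a::comm_ring_1^'m^'m) = c ^ CARD('m)"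
  by (subst det_diagonal) (auto simp: mat_def)

lemma det_matinv:
  fixes A :: "complex^'m^'m"
  assumes "det A \<noteq> 0"
  shows "det (mat c ** matrix_inv A) = c ^ CARD('m) / det A"
proof -
  have "invertible A" using assms invertible_det_nz by blast
  then have "A ** matrix_inv A = mat 1"
    unfolding matrix_inv_def invertible_def by (rule someI2_ex) auto
  then have "det A * det (matrix_inv A) = 1" by (metis det_I det_mul)
  then have "det (matrix_inv A) = 1 / det A" using assms by (simp add: field_simps)
  then show ?thesis by (simp add: det_mul det_mat_scalar)
qed

lemma herm_trigQ:
  assumes "transpose (Q 0) = Q 0"
  shows "herm (trig_Q n Q \<theta>)"
proof -
  have s: "Q 0 $ i $ j = Q 0 $ j $ i" for i j
    using assms by (metis transpose_def vec_lambda_beta)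
  show ?thesis unfolding herm_def trig_Q_def
    by (auto simp: exp_cnj transpose_def s add.commute intro!: sum.cong)
qed

lemma pd_path:
  fixes A :: "complex^'m^'m"
  assumes "pos_def_cmat A" "herm A" "0 \<le> t" "t \<le> 1"
  shows "pos_def_cmat (\<chi> i j. of_real (1-t) * mat 1 $ i $ j + of_real t * A$i$j)
       \<and> herm (\<chi> i j. of_real (1-t) * mat 1 $ i $ j + of_real t * A$i$j)"
proof
  show "herm (\<chi> i j. of_real (1-t) * mat 1 $ i $ j + of_real t * A$i$j)"
    unfolding herm_def
  proof (intro allI)
    fix i j
    have "A$i$j = cnj (A$j$i)" using assms(2) unfolding herm_def by blast
    then show "(\<chi> i j. of_real (1-t) * mat 1 $ i $ j + of_real t * A$i$j) $ i $ j =
      cnj ((\<chi> i j. of_real (1-t) * mat 1 $ i $ j + of_real t * A$i$j) $ j $ i)"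
      by (simp add: mat_def)
  qed
  show "pos_def_cmat (\<chi> i j. of_real (1-t) * mat 1 $ i $ j + of_real t * A$i$j)"
    unfolding pos_def_cmat_def Let_def
  proof (intro allI impI)
    fix z :: "complex^'m" assume z: "z \<noteq> 0"
    define qA where "qA = (\<Sum>j\<in>UNIV. \<Sum>h\<in>UNIV. cnj (z $ j) * A $ j $ h * z $ h)"
    have qA: "Im qA = 0" "Re qA > 0" using assms(1) z unfolding pos_def_cmat_def Let_def qA_def by auto
    define N where "N = (\<Sum>j\<in>UNIV. (cmod (z$j))^2)"
    obtain j0 where j0: "z $ j0 \<noteq> 0" using z by (metis vec_eq_iff zero_index)
    have "N > 0" unfolding N_def
      using j0 by (intro sum_pos2[where i=j0]) auto
    have "(\<Sum>j\<in>UNIV. \<Sum>h\<in>UNIV. cnj (z $ j) * (\<chi> i j. of_real (1-t) * mat 1 $ i $ j + of_real t * A$i$j) $ j $ h * z $ h)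
        = (\<Sum>j\<in>UNIV. \<Sum>h\<in>UNIV. of_real (1-t) * (cnj (z $ j) * mat 1 $ j $ h * z $ h) + of_real t * (cnj (z $ j) * A $ j $ h * z $ h))"
      by (simp add: algebra_simps)
    also have "\<dots> = of_real (1-t) * (\<Sum>j\<in>UNIV. \<Sum>h\<in>UNIV. cnj (z $ j) * mat 1 $ j $ h * z $ h) + of_real t * qA"
      unfolding qA_def by (simp add: sum.distrib sum_distrib_left)
    also have "(\<Sum>j\<in>UNIV. \<Sum>h\<in>UNIV. cnj (z $ j) * mat 1 $ j $ h * z $ h) = (\<Sum>j\<in>UNIV. cnj (z $ j) * z $ j)"
      by (simp add: mat_def if_distrib if_distribR cong: if_cong)
    also have "\<dots> = of_real N" unfolding N_def
      by (simp add: complex_mult_cnj mult.commute cmod_power2 of_real_sum)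
    finally have eq: "(\<Sum>j\<in>UNIV. \<Sum>h\<in>UNIV. cnj (z $ j) * (\<chi> i j. of_real (1-t) * mat 1 $ i $ j + of_real t * A$i$j) $ j $ h * z $ h)
       = of_real ((1-t) * N) + of_real t * qA" by simp
    have "Re (of_real ((1-t) * N) + of_real t * qA) > 0"
    proof (cases "t = 1")
      case True then show ?thesis using qA by simp
    next
      case False then have "(1-t) * N > 0" using assms(4) \<open>N > 0\<close> by simp
      moreover have "t * Re qA \<ge> 0" using assms(3) qA by simp
      ultimately show ?thesis by simp
    qed
    moreover have "Im (of_real ((1-t) * N) + of_real t * qA) = 0" using qA by simp
    ultimately show "Im (\<Sum>j\<in>UNIV. \<Sum>h\<in>UNIV. cnj (z $ j) * (\<chi> i j. of_real (1-t) * mat 1 $ i $ j + of_real t * A$i$j) $ j $ h * z $ h) = 0 \<and>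
          0 < Re (\<Sum>j\<in>UNIV. \<Sum>h\<in>UNIV. cnj (z $ j) * (\<chi> i j. of_real (1-t) * mat 1 $ i $ j + of_real t * A$i$j) $ j $ h * z $ h)"
      unfolding eq by simp
  qed
qed

lemma continuous_on_det:
  fixes F :: "'a::topological_space \<Rightarrow> complex^'m^'m"
  assumes "\<And>i j. continuous_on S (\<lambda>x. F x $ i $ j)"
  shows "continuous_on S (\<lambda>x. det (F x))"
  unfolding det_def by (intro continuous_intros assms)

lemma tendsto_det:
  fixes F :: "'a \<Rightarrow> complex^'m^'m"
  assumes "\<And>i j. ((\<lambda>x. F x $ i $ j) \<longlongrightarrow> L $ i $ j) G"
  shows "((\<lambda>x. det (F x)) \<longlongrightarrow> det L) G"
  unfolding det_def by (intro tendsto_intros assms)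

lemma pd_det_pos:
  fixes A :: "complex^'m^'m"
  assumes "pos_def_cmat A" "herm A"
  shows "Im (det A) = 0 \<and> Re (det A) > 0"
proof -
  define B where "B t = (\<chi> i j. of_real (1-t) * mat 1 $ i $ j + of_real t * A$i$j)" for t :: real
  have nz: "Re (det (B t)) \<noteq> 0" if "0 \<le> t" "t \<le> 1" for t
  proof -
    have "pos_def_cmat (B t)" "herm (B t)" using pd_path[OF assms that] unfolding B_def by auto
    then have "det (B t) \<noteq> 0" "Im (det (B t)) = 0" using pd_det_nz herm_det_real by auto
    then show ?thesis by (simp add: complex_eq_iff)
  qed
  have B0: "B 0 = mat 1" unfolding B_def by (simp add: vec_eq_iff)
  have B1: "B 1 = A" unfolding B_def by (simp add: vec_eq_iff)
  have cont: "continuous_on {0..1} (\<lambda>t. Re (det (B t)))"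
    unfolding B_def by (intro continuous_intros continuous_on_det)
  have "Re (det A) > 0"
  proof (rule ccontr)
    assume "\<not> Re (det A) > 0"
    then have "Re (det (B 1)) \<le> 0" using B1 by simp
    moreover have "0 \<le> Re (det (B 0))" using B0 by simp
    ultimately obtain t where "0 \<le> t" "t \<le> 1" "Re (det (B t)) = 0"
      using IVT2'[of "\<lambda>t. Re (det (B t))" 1 0 0, OF _ _ _ cont] by auto
    then show False using nz by blast
  qed
  then show ?thesis using herm_det_real[OF assms(2)] by simp
qed

abbreviation "II \<equiv> {0..<2*pi}"

lemma trig_p_eq: "trig_p n p \<theta> = p 0 + (\<Sum>k\<in>{1..n}. p k * cos (real k * \<theta>))"
  unfolding trig_p_def by (simp add: Re_exp Im_exp Re_sum sum_distrib_left)

lemma tendsto_fun_coord: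
  fixes X :: "'a \<Rightarrow> (nat \<Rightarrow> 'b::topological_space)"
  assumes "(X \<longlongrightarrow> x) F"
  shows "((\<lambda>k. X k i) \<longlongrightarrow> x i) F"
  using continuous_on_tendsto_compose[OF continuous_on_product_coordinates[of i] assms] by simp

lemma tendsto_trig_p:
  assumes "(X \<longlongrightarrow> p) F"
  shows "((\<lambda>k. trig_p n (X k) \<theta>) \<longlongrightarrow> trig_p n p \<theta>) F"
proof -
  have c: "((\<lambda>k. X k i) \<longlongrightarrow> p i) F" for i by (rule tendsto_fun_coord[OF assms])
  show ?thesis unfolding trig_p_eq by (intro tendsto_intros c)
qed

lemma trig_Q_entry: "trig_Q n Q \<theta> $ i $ j = complex_of_real (Q 0 $ i $ j) + (1/2) * (\<Sum>k\<in>{1..n}.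
       complex_of_real (Q k $ i $ j) * exp (- \<i> * of_nat k * of_real \<theta>)
     + complex_of_real (Q k $ j $ i) * exp (\<i> * of_nat k * of_real \<theta>))"
  unfolding trig_Q_def by (simp add: transpose_def)

lemma tendsto_det_trig_Q:
  fixes Y :: "'a \<Rightarrow> (nat \<Rightarrow> real^'m^'m)"
  assumes "(Y \<longlongrightarrow> Q) F"
  shows "((\<lambda>k. det (trig_Q n (Y k) \<theta>)) \<longlongrightarrow> det (trig_Q n Q \<theta>)) F"
proof (rule tendsto_det)
  fix i j
  have c: "((\<lambda>k. Y k c $ i $ j) \<longlongrightarrow> Q c $ i $ j) F" for c i j
    by (intro tendsto_vec_nth tendsto_fun_coord[OF assms])
  show "((\<lambda>k. trig_Q n (Y k) \<theta> $ i $ j) \<longlongrightarrow> trig_Q n Q \<theta> $ i $ j) F"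
    unfolding trig_Q_entry by (intro tendsto_intros c)
qed

lemma Bo_bar_nonneg:
  assumes "q \<in> Bo_bar n" "\<theta> \<in> II"
  shows "trig_p n q \<theta> \<ge> 0"
proof -
  obtain X where X: "\<And>k. X k \<in> Bo n" "X \<longlonglongrightarrow> q"
    using assms(1) unfolding Bo_bar_def closure_sequential by metis
  have "\<And>k. trig_p n (X k) \<theta> > 0" using X(1) assms(2) unfolding Bo_def by auto
  then show ?thesis
    using tendsto_trig_p[OF X(2), of n \<theta>] by (meson LIMSEQ_le_const less_imp_le)
qed

lemma Bm_det_pos:
  assumes "Q \<in> Bm n E" "\<theta> \<in> II"
  shows "Im (det (trig_Q n Q \<theta>)) = 0 \<and> Re (det (trig_Q n Q \<theta>)) > 0"
proof -
  have "transpose (Q 0) = Q 0" "pos_def_cmat (trig_Q n Q \<theta>)" using assms unfolding Bm_def by auto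
  then show ?thesis using pd_det_pos herm_trigQ by blast
qed

lemma Bm_bar_det:
  assumes "Q \<in> Bm_bar n E" "\<theta> \<in> II"
  shows "Im (det (trig_Q n Q \<theta>)) = 0 \<and> Re (det (trig_Q n Q \<theta>)) \<ge> 0"
proof -
  obtain Y where Y: "\<And>k. Y k \<in> Bm n E" "Y \<longlonglongrightarrow> Q"
  proof -
    have "Q \<in> closure (Bm n E)" using assms(1) unfolding Bm_bar_def by blast
    then show ?thesis using that unfolding closure_sequential by blast
  qed
  have t: "(\<lambda>k. det (trig_Q n (Y k) \<theta>)) \<longlonglongrightarrow> det (trig_Q n Q \<theta>)"
    by (rule tendsto_det_trig_Q[OF Y(2)])
  have p: "\<And>k. Im (det (trig_Q n (Y k) \<theta>)) = 0 \<and> Re (det (trig_Q n (Y k) \<theta>)) > 0"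
    using Bm_det_pos[OF Y(1) assms(2)] by blast
  have "(\<lambda>k. Im (det (trig_Q n (Y k) \<theta>))) \<longlonglongrightarrow> Im (det (trig_Q n Q \<theta>))" by (intro tendsto_intros t)
  then have "Im (det (trig_Q n Q \<theta>)) = 0" using p by (simp add: LIMSEQ_const_iff)
  moreover have "(\<lambda>k. Re (det (trig_Q n (Y k) \<theta>))) \<longlonglongrightarrow> Re (det (trig_Q n Q \<theta>))" by (intro tendsto_intros t)
  then have "Re (det (trig_Q n Q \<theta>)) \<ge> 0" using p by (meson LIMSEQ_le_const less_imp_le)
  ultimately show ?thesis by blast
qed

definition Phi :: "nat \<Rightarrow> real \<Rightarrow> complex \<Rightarrow> ereal" where
  "Phi N a d = (if a > 0 \<and> d \<noteq> 0 then ereal (a * ln (Re (complex_of_real (a^N) / d)) - real N * a)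
     else if a = 0 then 0 else PInfty)"

definition Psi :: "real \<Rightarrow> ereal" where
  "Psi a = (if a > 0 then ereal (1/a) else PInfty)"

lemma Re_div_real: "Im d = 0 \<Longrightarrow> Re (complex_of_real x / d) = x / Re d"
proof -
  assume "Im d = 0"
  then have "d = complex_of_real (Re d)" by (simp add: complex_eq_iff)
  then show ?thesis by (metis Re_complex_of_real of_real_divide)
qed

lemma xlnx_bound:
  fixes a :: real assumes "a > 0" shows "a * ln a \<ge> - 2 * sqrt a"
proof -
  define s where "s = sqrt a"
  have s: "s > 0" "a = s^2" using assms by (auto simp: s_def)
  have "ln (1/s) \<le> 1/s - 1" using s by (intro ln_le_minus_one) simp
  then have "- ln s \<le> 1/s - 1" using s by (simp add: ln_div)
  then have "s * (- ln s) \<le> s * (1/s - 1)" using s by (intro mult_left_mono) auto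
  then have 1: "s * ln s \<ge> s - 1" using s by (simp add: algebra_simps)
  have la: "ln a = 2 * ln s" unfolding s(2) using s(1) by (simp add: ln_mult power2_eq_square)
  have "a * ln a = 2 * s * (s * ln s)" unfolding la by (simp add: s(2) power2_eq_square)
  also have "\<dots> \<ge> 2 * s * (s - 1)" using 1 s by (intro mult_left_mono) auto
  finally have "a * ln a \<ge> 2 * s * (s - 1)" .
  moreover have "2 * s * (s - 1) \<ge> - 2 * s" using s by (simp add: algebra_simps)
  ultimately show ?thesis unfolding s_def by linarith
qed

lemma Phi_real:
  assumes "a > 0" "Im d = 0" "Re d > 0"
  shows "Phi N a d = ereal (a * (real N * ln a - ln (Re d)) - real N * a)"
proof -
  have "d \<noteq> 0" using assms by auto
  have e: "Re (complex_of_real (a^N) / d) = a^N / Re d" by (rule Re_div_real[OF assms(2)])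
  have "Phi N a d = ereal (a * ln (Re (complex_of_real (a^N) / d)) - real N * a)"
    unfolding Phi_def using assms \<open>d \<noteq> 0\<close> by simp
  also have "\<dots> = ereal (a * (real N * ln a - ln (Re d)) - real N * a)"
    unfolding e using assms by (simp add: ln_div ln_realpow)
  finally show ?thesis .
qed

lemma Phi_lower:
  assumes "a \<ge> 0" "Im d = 0" "Re d \<ge> 0" "Re d \<le> D" "D \<ge> 1"
  shows "ereal (- 2 * real N * sqrt a - a * ln D - real N * a) \<le> Phi N a d"
proof (cases "a = 0")
  case True then show ?thesis by (simp add: Phi_def)
next
  case False
  then have a: "a > 0" using assms by simp
  show ?thesis
  proof (cases "d = 0")
    case True then show ?thesis using a by (simp add: Phi_def)
  next
    case False
    then have r: "Re d > 0" using assms by (metis complex_eq_iff less_eq_real_def zero_complex.simps)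
    have "ln (Re d) \<le> ln D" using r assms by simp
    then have 1: "a * ln (Re d) \<le> a * ln D" using a by (intro mult_left_mono) auto
    have "real N * (a * ln a) \<ge> real N * (- 2 * sqrt a)" using xlnx_bound[OF a] by (intro mult_left_mono) auto
    then show ?thesis using 1 unfolding Phi_real[OF a assms(2) r] by (simp add: algebra_simps)
  qed
qed

lemma Phi_lsc:
  fixes A :: "nat \<Rightarrow> real" and Dd :: "nat \<Rightarrow> complex"
  assumes A: "A \<longlonglongrightarrow> a" and Dl: "Dd \<longlonglongrightarrow> d"
    and pos: "\<And>k. A k \<ge> 0" "\<And>k. Im (Dd k) = 0" "\<And>k. Re (Dd k) \<ge> 0" "\<And>k. Re (Dd k) \<le> D"
    and D: "D \<ge> 1"
    and lim: "a \<ge> 0" "Im d = 0" "Re d \<ge> 0"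
  shows "Phi N a d \<le> liminf (\<lambda>k. Phi N (A k) (Dd k))"
  unfolding le_Liminf_iff
proof (intro allI impI)
  fix y assume y: "y < Phi N a d"
  have ReD: "(\<lambda>k. Re (Dd k)) \<longlonglongrightarrow> Re d" by (intro tendsto_intros Dl)
  consider "a > 0" "d \<noteq> 0" | "a > 0" "d = 0" | "a = 0" using lim by force
  then show "eventually (\<lambda>k. y < Phi N (A k) (Dd k)) sequentially"
  proof cases
    case 1
    then have r: "Re d > 0" using lim by (metis complex_eq_iff less_eq_real_def zero_complex.simps)
    have ev: "eventually (\<lambda>k. A k > 0 \<and> Re (Dd k) > 0) sequentially"
      using order_tendstoD(1)[OF A 1(1)] order_tendstoD(1)[OF ReD r] by eventually_elim auto
    have t: "(\<lambda>k. ereal (A k * (real N * ln (A k) - ln (Re (Dd k))) - real N * A k))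
       \<longlonglongrightarrow> ereal (a * (real N * ln a - ln (Re d)) - real N * a)"
      using 1 r by (intro tendsto_intros A ReD) auto
    have "eventually (\<lambda>k. y < ereal (A k * (real N * ln (A k) - ln (Re (Dd k))) - real N * A k)) sequentially"
      using order_tendstoD(1)[OF t] y unfolding Phi_real[OF 1(1) lim(2) r] by blast
    then show ?thesis using ev
      by eventually_elim (use pos in \<open>simp add: Phi_real\<close>)
  next
    case 2
    obtain M :: real where M: "y \<le> ereal M" "M \<ge> 0"
    proof (cases y)
      case (real r) then show ?thesis using that[of "max r 0"] by auto
    next
      case PInf then show ?thesis using y by simp
    next
      case MInf then show ?thesis using that[of 0] by auto
    qed
    define c0 where "c0 = real N * ln (a/2) - real N"
    define B where "B = 2 * M / a + 1"
    have "2 * M / a \<ge> 0" using M 2 by simp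
    then have B: "B > 0" by (simp add: B_def)
    have ev1: "eventually (\<lambda>k. A k > a/2) sequentially"
      using order_tendstoD(1)[OF A, of "a/2"] 2 by simp
    have "Re d = 0" using 2 by simp
    then have ev2: "eventually (\<lambda>k. Re (Dd k) < exp (c0 - B)) sequentially"
      using order_tendstoD(2)[OF ReD, of "exp (c0 - B)"] by simp
    show ?thesis using ev1 ev2
    proof eventually_elim
      case (elim k)
      have ak: "A k > 0" using elim 2 by linarith
      show ?case
      proof (cases "Dd k = 0")
        case True
        have "y \<noteq> \<infinity>" using M(1) by auto
        then show ?thesis using ak True by (simp add: Phi_def)
      next
        case False
        then have rk: "Re (Dd k) > 0" using pos(2,3)[of k] by (metis complex_eq_iff less_eq_real_def zero_complex.simps)
        have "ln (Re (Dd k)) < c0 - B" using elim(2) rk by (metis exp_ln ln_less_cancel_iff exp_gt_zero ln_exp)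
        moreover have "ln (A k) > ln (a/2)" using elim(1) 2 by simp
        then have "real N * ln (A k) \<ge> real N * ln (a/2)" by (intro mult_left_mono) auto
        ultimately have "real N * ln (A k) - ln (Re (Dd k)) - real N > B" unfolding c0_def by linarith
        then have "A k * (real N * ln (A k) - ln (Re (Dd k)) - real N) > A k * B"
          using ak by (intro mult_strict_left_mono) auto
        moreover have "A k * B \<ge> a/2 * B" using elim(1) B by (intro mult_right_mono) auto
        moreover have "a/2 * B > M" using 2 M unfolding B_def by (simp add: field_simps)
        ultimately have "A k * (real N * ln (A k) - ln (Re (Dd k))) - real N * A k > M"
          by (simp add: algebra_simps)
        then have "ereal M < ereal (A k * (real N * ln (A k) - ln (Re (Dd k))) - real N * A k)" by simp
        then show ?thesis using M(1) unfolding Phi_real[OF ak pos(2) rk]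
          by (rule le_less_trans[rotated])
      qed
    qed
  next
    case 3
    define lb where "lb x = - 2 * real N * sqrt x - x * ln D - real N * x" for x
    have t: "(\<lambda>k. ereal (lb (A k))) \<longlonglongrightarrow> ereal (lb a)"
      unfolding lb_def by (intro tendsto_intros A)
    have "y < ereal (lb a)" using y 3 by (simp add: Phi_def lb_def zero_ereal_def)
    then have "eventually (\<lambda>k. y < ereal (lb (A k))) sequentially" using order_tendstoD(1)[OF t] by blast
    then show ?thesis
    proof eventually_elim
      case (elim k)
      have "ereal (lb (A k)) \<le> Phi N (A k) (Dd k)" unfolding lb_def by (rule Phi_lower[OF pos D])
      then show ?case using elim by simp
    qed
  qed
qed

lemma Psi_lsc:
  fixes A :: "nat \<Rightarrow> real"
  assumes A: "A \<longlonglongrightarrow> a" and pos: "\<And>k. A k \<ge> 0" and a: "a \<ge> 0"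
  shows "Psi a \<le> liminf (\<lambda>k. Psi (A k))"
  unfolding le_Liminf_iff
proof (intro allI impI)
  fix y assume y: "y < Psi a"
  show "eventually (\<lambda>k. y < Psi (A k)) sequentially"
  proof (cases "a > 0")
    case True
    have t: "(\<lambda>k. ereal (1 / A k)) \<longlonglongrightarrow> ereal (1/a)" using True by (intro tendsto_intros A) auto
    have "eventually (\<lambda>k. y < ereal (1 / A k)) sequentially"
      using order_tendstoD(1)[OF t] y True by (simp add: Psi_def)
    then show ?thesis using order_tendstoD(1)[OF A True]
      by eventually_elim (simp add: Psi_def)
  next
    case False
    then have a0: "a = 0" using a by simp
    obtain M :: real where M: "y \<le> ereal M" "M \<ge> 1"
    proof (cases y)
      case (real r) then show ?thesis using that[of "max r 1"] by auto
    next
      case PInf then show ?thesis using y a0 by (simp add: Psi_def)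
    next
      case MInf then show ?thesis using that[of 1] by auto
    qed
    have "eventually (\<lambda>k. A k < 1/(2*M)) sequentially"
      using order_tendstoD(2)[OF A, of "1/(2*M)"] a0 M by simp
    then show ?thesis
    proof eventually_elim
      case (elim k)
      show ?case
      proof (cases "A k > 0")
        case True
        then have "1 / A k > 2*M" using elim M by (simp add: field_simps)
        then have "ereal M < ereal (1 / A k)" using M by simp
        then have "y < ereal (1 / A k)" using M(1) by (rule le_less_trans[rotated])
        then show ?thesis using True unfolding Psi_def by simp
      next
        case False
        have "y \<noteq> \<infinity>" using M(1) by auto
        then show ?thesis using False by (simp add: Psi_def)
      qed
    qed
  qed
qed

lemma pt_ident:
  fixes x :: ereal
  assumes "C \<ge> 0" "- ereal C \<le> x"
  shows "e2ennreal (max 0 x) + ennreal C = e2ennreal (x + ereal C) + e2ennreal (max 0 (- x))"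
proof (cases x)
  case (real r)
  show ?thesis
  proof (cases "r \<ge> 0")
    case True then show ?thesis using real assms by (simp add: ennreal_plus max_def e2ennreal_neg)
  next
    case False
    then have "e2ennreal (max 0 x) = 0" using real by (simp add: max_def zero_ereal_def)
    moreover have "max 0 (- x) = ereal (- r)" using real False by (simp add: max_def zero_ereal_def)
    moreover have "r + C \<ge> 0" using real assms by simp
    ultimately show ?thesis using real assms False by (simp add: ennreal_plus[symmetric])
  qed
next
  case PInf then show ?thesis by simp
next
  case MInf then show ?thesis using assms by simp
qed

lemma measure_II: "emeasure lborel II = ennreal (2*pi)"
  by simp

lemma intT_shift:
  assumes f: "f \<in> borel_measurable lborel" and C: "C \<ge> 0" and lb: "\<And>\<theta>. \<theta> \<in> II \<Longrightarrow> - ereal C \<le> f \<theta>"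
  shows "intT f = ereal (1/(2*pi)) * (enn2ereal (\<integral>\<^sup>+ \<theta>\<in>II. e2ennreal (f \<theta> + ereal C) \<partial>lborel) - ereal (2*pi*C))"
proof -
  define P where "P = (\<integral>\<^sup>+ \<theta>\<in>II. e2ennreal (max 0 (f \<theta>)) \<partial>lborel)"
  define N where "N = (\<integral>\<^sup>+ \<theta>\<in>II. e2ennreal (max 0 (- f \<theta>)) \<partial>lborel)"
  define V where "V = (\<integral>\<^sup>+ \<theta>\<in>II. e2ennreal (f \<theta> + ereal C) \<partial>lborel)"
  have cint: "(\<integral>\<^sup>+ \<theta>. ennreal C * indicator II \<theta> \<partial>lborel) = ennreal (2*pi*C)"
  proof -
    have "ennreal (2*pi*C) = ennreal C * ennreal (2*pi)"
      using C by (simp add: ennreal_mult[symmetric] mult.commute)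
    then show ?thesis by (simp add: nn_integral_cmult_indicator)
  qed
  have "(\<integral>\<^sup>+ \<theta>. (e2ennreal (max 0 (f \<theta>)) * indicator II \<theta> + ennreal C * indicator II \<theta>) \<partial>lborel)
      = (\<integral>\<^sup>+ \<theta>. (e2ennreal (f \<theta> + ereal C) * indicator II \<theta> + e2ennreal (max 0 (- f \<theta>)) * indicator II \<theta>) \<partial>lborel)"
  proof (rule nn_integral_cong)
    fix \<theta> show "e2ennreal (max 0 (f \<theta>)) * indicator II \<theta> + ennreal C * indicator II \<theta> =
         e2ennreal (f \<theta> + ereal C) * indicator II \<theta> + e2ennreal (max 0 (- f \<theta>)) * indicator II \<theta>"
      using pt_ident[OF C lb[of \<theta>]] by (cases "\<theta> \<in> II") auto
  qed
  also have "\<dots> = V + N" unfolding V_def N_def using f by (intro nn_integral_add) auto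
  finally have "P + ennreal (2*pi*C) = V + N" unfolding P_def cint[symmetric] using f
    by (subst nn_integral_add[symmetric]) auto
  then have eq: "enn2ereal P + ereal (2*pi*C) = enn2ereal V + enn2ereal N"
    using C by (metis enn2ereal_ennreal plus_ennreal.rep_eq mult_nonneg_nonneg pi_ge_zero zero_le_numeral)
  have "N \<le> (\<integral>\<^sup>+ \<theta>. ennreal C * indicator II \<theta> \<partial>lborel)" unfolding N_def
  proof (rule nn_integral_mono)
    fix \<theta> show "e2ennreal (max 0 (- f \<theta>)) * indicator II \<theta> \<le> ennreal C * indicator II \<theta>"
    proof (cases "\<theta> \<in> II")
      case True
      have "max 0 (- f \<theta>) \<le> ereal C" using lb[OF True] C by (auto simp: ereal_uminus_le_reorder)
      then have "e2ennreal (max 0 (- f \<theta>)) \<le> e2ennreal (ereal C)" by (rule e2ennreal_mono)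
      then show ?thesis using True by simp
    qed simp
  qed
  then have "enn2ereal N \<le> ereal (2*pi*C)" unfolding cint using C
    by (metis enn2ereal_ennreal less_eq_ennreal.rep_eq mult_nonneg_nonneg pi_ge_zero zero_le_numeral)
  moreover have "enn2ereal N \<ge> 0" by simp
  ultimately obtain n0 where n0: "enn2ereal N = ereal n0" by (cases "enn2ereal N") auto
  have "enn2ereal P - enn2ereal N = enn2ereal V - ereal (2*pi*C)"
    using eq enn2ereal_nonneg[of P] enn2ereal_nonneg[of V] unfolding n0
    by (cases "enn2ereal P"; cases "enn2ereal V") auto
  then show ?thesis unfolding intT_def P_def[symmetric] N_def[symmetric] V_def[symmetric] by simp
qed

lemma ereal_minus_real: "(x::ereal) - ereal c = x + ereal (- c)"
  by (cases x) auto

lemma intT_fatou: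
  fixes u :: "nat \<Rightarrow> real \<Rightarrow> ereal"
  assumes meas: "\<And>k. u k \<in> borel_measurable lborel" and C: "C \<ge> 0"
    and lb: "\<And>k \<theta>. \<theta> \<in> II \<Longrightarrow> - ereal C \<le> u k \<theta>"
    and v: "v \<in> borel_measurable lborel" and lbv: "\<And>\<theta>. \<theta> \<in> II \<Longrightarrow> - ereal C \<le> v \<theta>"
    and pw: "\<And>\<theta>. \<theta> \<in> II \<Longrightarrow> v \<theta> \<le> liminf (\<lambda>k. u k \<theta>)"
  shows "intT v \<le> liminf (\<lambda>k. intT (u k))"
proof -
  define W where "W w = (\<integral>\<^sup>+ \<theta>\<in>II. e2ennreal (w \<theta> + ereal C) \<partial>lborel)" for w :: "real \<Rightarrow> ereal"
  have mono_e: "mono e2ennreal" by (simp add: mono_def e2ennreal_mono)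
  have mono_ee: "mono enn2ereal" by (simp add: mono_def less_eq_ennreal.rep_eq)
  have "W v \<le> (\<integral>\<^sup>+ \<theta>. liminf (\<lambda>k. e2ennreal (u k \<theta> + ereal C) * indicator II \<theta>) \<partial>lborel)"
    unfolding W_def
  proof (rule nn_integral_mono)
    fix \<theta> show "e2ennreal (v \<theta> + ereal C) * indicator II \<theta> \<le> liminf (\<lambda>k. e2ennreal (u k \<theta> + ereal C) * indicator II \<theta>)"
    proof (cases "\<theta> \<in> II")
      case True
      have "liminf (\<lambda>k. e2ennreal (u k \<theta> + ereal C)) = e2ennreal (liminf (\<lambda>k. u k \<theta> + ereal C))"
        by (rule Liminf_compose_continuous_mono[OF continuous_on_e2ennreal mono_e]) simp
      also have "liminf (\<lambda>k. u k \<theta> + ereal C) = liminf (\<lambda>k. u k \<theta>) + ereal C"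
        by (rule Liminf_add_ereal_right) auto
      finally have "liminf (\<lambda>k. e2ennreal (u k \<theta> + ereal C)) \<ge> e2ennreal (v \<theta> + ereal C)"
        using pw[OF True] by (simp add: e2ennreal_mono add_right_mono)
      then show ?thesis using True by simp
    qed simp
  qed
  also have "\<dots> \<le> liminf (\<lambda>k. W (u k))" unfolding W_def
    by (rule nn_integral_liminf) (use meas in measurable)
  finally have WF: "W v \<le> liminf (\<lambda>k. W (u k))" .
  have "enn2ereal (W v) \<le> enn2ereal (liminf (\<lambda>k. W (u k)))" using WF by (simp add: less_eq_ennreal.rep_eq)
  also have "\<dots> = liminf (\<lambda>k. enn2ereal (W (u k)))"
    by (rule Liminf_compose_continuous_mono[OF continuous_on_enn2ereal mono_ee, symmetric]) simp
  finally have WE: "enn2ereal (W v) \<le> liminf (\<lambda>k. enn2ereal (W (u k)))" .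
  have "intT v = ereal (1/(2*pi)) * (enn2ereal (W v) - ereal (2*pi*C))"
    unfolding W_def by (rule intT_shift[OF v C lbv])
  also have "\<dots> \<le> ereal (1/(2*pi)) * (liminf (\<lambda>k. enn2ereal (W (u k))) - ereal (2*pi*C))"
    by (intro ereal_mult_left_mono ereal_minus_mono WE) auto
  also have "liminf (\<lambda>k. enn2ereal (W (u k))) - ereal (2*pi*C) = liminf (\<lambda>k. enn2ereal (W (u k)) - ereal (2*pi*C))"
    using Liminf_add_ereal_right[where F=sequentially and g="\<lambda>k. enn2ereal (W (u k))" and c="ereal (- (2*pi*C))"] by (simp add: ereal_minus_real)
  also have "ereal (1/(2*pi)) * \<dots> = liminf (\<lambda>k. ereal (1/(2*pi)) * (enn2ereal (W (u k)) - ereal (2*pi*C)))"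
    by (rule Liminf_ereal_mult_left[symmetric]) auto
  also have "\<dots> = liminf (\<lambda>k. intT (u k))"
    unfolding W_def using intT_shift[OF meas C lb] by simp
  finally show ?thesis .
qed

lemma J_integrand_Phi:
  fixes Q :: "nat \<Rightarrow> real^'m^'m"
  shows "J_integrand n p Q \<theta> = Phi CARD('m) (trig_p n p \<theta>) (det (trig_Q n Q \<theta>))"
proof (cases "trig_p n p \<theta> > 0 \<and> det (trig_Q n Q \<theta>) \<noteq> 0")
  case True
  have "det (mat (complex_of_real (trig_p n p \<theta>)) ** matrix_inv (trig_Q n Q \<theta>))
     = complex_of_real ((trig_p n p \<theta>) ^ CARD('m)) / det (trig_Q n Q \<theta>)"
    using det_matinv[OF True[THEN conjunct2]] by simp
  then show ?thesis using True unfolding J_integrand_def Phi_def Let_def by simp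
next
  case False then show ?thesis unfolding J_integrand_def Phi_def Let_def by auto
qed

lemma g_Psi: "(\<lambda>\<theta>. if trig_p n p \<theta> > 0 then ereal (1 / trig_p n p \<theta>) else PInfty) = (\<lambda>\<theta>. Psi (trig_p n p \<theta>))"
  by (simp add: Psi_def)

lemma cont_trig_p: "continuous_on UNIV (trig_p n p)"
proof -
  have "trig_p n p = (\<lambda>\<theta>. p 0 + (\<Sum>k\<in>{1..n}. p k * cos (real k * \<theta>)))" by (simp add: trig_p_eq fun_eq_iff)
  then show ?thesis by (simp add: continuous_intros)
qed

lemma cont_det_trig_Q: "continuous_on UNIV (\<lambda>\<theta>. det (trig_Q n Q \<theta>))"
  by (rule continuous_on_det) (simp add: trig_Q_entry continuous_intros)

lemma meas_trig_p[measurable]: "trig_p n p \<in> borel_measurable borel"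
  by (rule borel_measurable_continuous_onI[OF cont_trig_p])

lemma meas_det_trig_Q[measurable]: "(\<lambda>\<theta>. det (trig_Q n Q \<theta>)) \<in> borel_measurable borel"
  by (rule borel_measurable_continuous_onI[OF cont_det_trig_Q])

lemma meas_Phi: "(\<lambda>\<theta>. Phi N (trig_p n p \<theta>) (det (trig_Q n Q \<theta>))) \<in> borel_measurable lborel"
  unfolding Phi_def by measurable

lemma meas_Psi: "(\<lambda>\<theta>. Psi (trig_p n p \<theta>)) \<in> borel_measurable lborel"
  unfolding Psi_def by measurable

lemma trig_p_bound: "\<bar>trig_p n q \<theta>\<bar> \<le> (\<Sum>k\<in>{0..n}. \<bar>q k\<bar>)"
proof -
  have "\<bar>trig_p n q \<theta>\<bar> \<le> \<bar>q 0\<bar> + \<bar>\<Sum>k\<in>{1..n}. q k * cos (real k * \<theta>)\<bar>"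
    unfolding trig_p_eq by (rule abs_triangle_ineq)
  also have "\<bar>\<Sum>k\<in>{1..n}. q k * cos (real k * \<theta>)\<bar> \<le> (\<Sum>k\<in>{1..n}. \<bar>q k\<bar>)"
  proof -
    have "\<bar>\<Sum>k\<in>{1..n}. q k * cos (real k * \<theta>)\<bar> \<le> (\<Sum>k\<in>{1..n}. \<bar>q k * cos (real k * \<theta>)\<bar>)"
      by (rule sum_abs)
    also have "\<dots> \<le> (\<Sum>k\<in>{1..n}. \<bar>q k\<bar>)"
      by (intro sum_mono) (simp add: abs_mult mult_left_le)
    finally show ?thesis .
  qed
  also have "\<bar>q 0\<bar> + (\<Sum>k\<in>{1..n}. \<bar>q k\<bar>) = (\<Sum>k\<in>{0..n}. \<bar>q k\<bar>)"
    by (simp add: sum.atLeast_Suc_atMost[of 0 n] atLeastSucAtMost_greaterThanAtMost)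
  finally show ?thesis by simp
qed

lemma det_bound:
  fixes A :: "complex^'m^'m"
  assumes "\<And>i j. cmod (A$i$j) \<le> B"
  shows "cmod (det A) \<le> real (card {p. p permutes (UNIV::'m set)}) * B ^ CARD('m)"
proof -
  have B: "B \<ge> 0" using assms[of undefined undefined] norm_ge_zero order_trans by blast
  have "cmod (det A) \<le> (\<Sum>p\<in>{p. p permutes (UNIV::'m set)}. cmod (of_int (sign p) * (\<Prod>i\<in>UNIV. A$i$p i)))"
    unfolding det_def by (rule norm_sum)
  also have "\<dots> \<le> (\<Sum>p\<in>{p. p permutes (UNIV::'m set)}. B ^ CARD('m))"
  proof (rule sum_mono)
    fix p :: "'m \<Rightarrow> 'm"
    have s: "cmod (of_int (sign p)) = 1" by (simp add: sign_def)
    have "(\<Prod>i\<in>UNIV. cmod (A$i$p i)) \<le> (\<Prod>i\<in>(UNIV::'m set). B)"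
      by (intro prod_mono) (simp add: assms)
    moreover have "\<bar>real_of_int (sign p)\<bar> = 1" by (simp add: sign_def)
    ultimately show "cmod (of_int (sign p) * (\<Prod>i\<in>UNIV. A$i$p i)) \<le> B ^ CARD('m)"
      by (simp add: norm_mult prod_norm)
  qed
  finally show ?thesis by simp
qed

definition Qsz :: "nat \<Rightarrow> (nat \<Rightarrow> real^'m^'m) \<Rightarrow> real" where
  "Qsz n Q = (\<Sum>k\<in>{0..n}. \<Sum>i\<in>UNIV. \<Sum>j\<in>UNIV. \<bar>Q k $ i $ j\<bar>)"

lemma entry_le_T: "\<bar>Q k $ i $ j\<bar> \<le> (\<Sum>i\<in>UNIV. \<Sum>j\<in>UNIV. \<bar>(Q k :: real^'m^'m) $ i $ j\<bar>)"
proof -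
  have "\<bar>Q k $ i $ j\<bar> \<le> (\<Sum>j\<in>UNIV. \<bar>Q k $ i $ j\<bar>)"
    by (rule member_le_sum[of j UNIV "\<lambda>j. \<bar>Q k $ i $ j\<bar>"]) auto
  also have "\<dots> \<le> (\<Sum>i\<in>UNIV. \<Sum>j\<in>UNIV. \<bar>Q k $ i $ j\<bar>)"
    by (rule member_le_sum[of i UNIV "\<lambda>i. \<Sum>j\<in>UNIV. \<bar>Q k $ i $ j\<bar>"]) (auto intro: sum_nonneg)
  finally show ?thesis .
qed

lemma trig_Q_entry_bound: "cmod (trig_Q n Q \<theta> $ i $ j) \<le> Qsz n (Q :: nat \<Rightarrow> real^'m^'m)"
proof -
  define T where "T k = (\<Sum>i\<in>UNIV. \<Sum>j\<in>UNIV. \<bar>Q k $ i $ j\<bar>)" for k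
  have eb: "cmod (exp (z * of_real t)) = 1" if "Re z = 0" for z t
    using that by (simp add: norm_exp_eq_Re)
  have tm: "cmod (complex_of_real (Q k $ i $ j) * exp (- \<i> * of_nat k * of_real \<theta>)
     + complex_of_real (Q k $ j $ i) * exp (\<i> * of_nat k * of_real \<theta>)) \<le> 2 * T k" for k
  proof -
    have "cmod (complex_of_real (Q k $ i $ j) * exp (- \<i> * of_nat k * of_real \<theta>)
       + complex_of_real (Q k $ j $ i) * exp (\<i> * of_nat k * of_real \<theta>))
      \<le> cmod (complex_of_real (Q k $ i $ j) * exp (- \<i> * of_nat k * of_real \<theta>))
       + cmod (complex_of_real (Q k $ j $ i) * exp (\<i> * of_nat k * of_real \<theta>))"
      by (rule norm_triangle_ineq)
    also have "\<dots> = \<bar>Q k $ i $ j\<bar> + \<bar>Q k $ j $ i\<bar>"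
      by (simp add: norm_mult norm_exp_eq_Re)
    also have "\<dots> \<le> 2 * T k" using entry_le_T[of Q k i j] entry_le_T[of Q k j i] unfolding T_def by simp
    finally show ?thesis .
  qed
  have "cmod (trig_Q n Q \<theta> $ i $ j) \<le> \<bar>Q 0 $ i $ j\<bar> + (1/2) * (\<Sum>k\<in>{1..n}. 2 * T k)"
  proof -
    have "cmod (trig_Q n Q \<theta> $ i $ j) \<le> cmod (complex_of_real (Q 0 $ i $ j)) + cmod ((1/2) * (\<Sum>k\<in>{1..n}.
       complex_of_real (Q k $ i $ j) * exp (- \<i> * of_nat k * of_real \<theta>)
     + complex_of_real (Q k $ j $ i) * exp (\<i> * of_nat k * of_real \<theta>)))"
      unfolding trig_Q_entry by (rule norm_triangle_ineq)
    also have "cmod ((1/2) * (\<Sum>k\<in>{1..n}.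
       complex_of_real (Q k $ i $ j) * exp (- \<i> * of_nat k * of_real \<theta>)
     + complex_of_real (Q k $ j $ i) * exp (\<i> * of_nat k * of_real \<theta>))) \<le> (1/2) * (\<Sum>k\<in>{1..n}. 2 * T k)"
    proof -
      have h: "cmod (\<Sum>k\<in>{1..n}.
       complex_of_real (Q k $ i $ j) * exp (- \<i> * of_nat k * of_real \<theta>)
     + complex_of_real (Q k $ j $ i) * exp (\<i> * of_nat k * of_real \<theta>)) \<le> (\<Sum>k\<in>{1..n}. 2 * T k)"
        by (rule order_trans[OF norm_sum sum_mono]) (rule tm)
      show ?thesis unfolding norm_mult using h by simp
    qed
    finally show ?thesis by simp
  qed
  also have "\<dots> \<le> T 0 + (\<Sum>k\<in>{1..n}. T k)" using entry_le_T[of Q 0 i j] unfolding T_def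
    by (simp add: sum_distrib_left)
  also have "\<dots> = Qsz n Q" unfolding Qsz_def T_def[symmetric]
    by (simp add: sum.atLeast_Suc_atMost[of 0 n])
  finally show ?thesis .
qed



lemma lsc_seq:
  fixes F :: "'a::first_countable_topology \<Rightarrow> ereal"
  assumes H: "\<And>X x. (\<And>k. X k \<in> S) \<Longrightarrow> x \<in> S \<Longrightarrow> X \<longlonglongrightarrow> x \<Longrightarrow> F x \<le> liminf (\<lambda>k. F (X k))"
  shows "lsc_on S F"
  unfolding lsc_on_def
proof
  fix a
  define T where "T = {x\<in>S. F x \<le> a}"
  have "T = S \<inter> closure T"
  proof
    show "S \<inter> closure T \<subseteq> T"
    proof
      fix x assume x: "x \<in> S \<inter> closure T"
      then have "x \<in> closure T" by blast
      then obtain X where X: "\<And>k. X k \<in> T" "X \<longlonglongrightarrow> x" unfolding closure_sequential by metis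
      have "F x \<le> liminf (\<lambda>k. F (X k))" using X x by (intro H) (auto simp: T_def)
      also have "\<dots> \<le> a" using X(1) by (intro Liminf_le) (auto simp: T_def)
      finally show "x \<in> T" using x by (simp add: T_def)
    qed
  next
    show "T \<subseteq> S \<inter> closure T" using closure_subset[of T] by (auto simp: T_def)
  qed
  then have "closedin (top_of_set S) T" by (metis closedin_closed closed_closure)
  then have "openin (top_of_set S) (S - T)" by (metis openin_diff openin_topspace topspace_euclidean_subtopology)
  moreover have "S - T = {x\<in>S. a < F x}" by (auto simp: T_def)
  ultimately show "openin (top_of_set S) {x\<in>S. a < F x}" by simp
qed

lemma intT_lower:
  assumes f: "f \<in> borel_measurable lborel" and C: "C \<ge> 0" and lb: "\<And>\<theta>. \<theta> \<in> II \<Longrightarrow> - ereal C \<le> f \<theta>"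
  shows "- ereal C \<le> intT f"
proof -
  have "ereal (1/(2*pi)) * (0 - ereal (2*pi*C)) \<le>
     ereal (1/(2*pi)) * (enn2ereal (\<integral>\<^sup>+ \<theta>\<in>II. e2ennreal (f \<theta> + ereal C) \<partial>lborel) - ereal (2*pi*C))"
    by (intro ereal_mult_left_mono ereal_minus_mono) auto
  moreover have "ereal (1/(2*pi)) * (0 - ereal (2*pi*C)) = - ereal C" by simp
  ultimately show ?thesis using intT_shift[OF f C lb] by simp
qed

lemma ereal_add_sub: "(a::ereal) + ereal b - ereal c = a + ereal (b - c)"
  by (cases a) auto

theorem proposition2:
  fixes n :: nat and E :: "('m::finite \<times> 'm) set"
    and R :: "nat \<Rightarrow> real^'m^'m" and c :: "nat \<Rightarrow> real" and lam :: real
  assumes "n \<ge> 1"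
    and "sym E" and "\<forall>j. (j, j) \<in> E"
    and "transpose (R 0) = R 0"
    and "lam > 0"
  shows "lsc_on (Bo_bar n \<times> Bm_bar n E) (J_tilde n R c lam)"
proof (rule lsc_seq)
  fix X x assume XS: "\<And>k. X k \<in> Bo_bar n \<times> Bm_bar n E" and xS: "x \<in> Bo_bar n \<times> Bm_bar n E"
    and Xx: "X \<longlonglongrightarrow> x"
  obtain p Q where x: "x = (p, Q)" by (cases x)
  define P where "P k = fst (X k)" for k
  define QQ where "QQ k = snd (X k)" for k
  have Pp: "P \<longlonglongrightarrow> p" using tendsto_fst[OF Xx] unfolding x P_def by simp
  have QQQ: "QQ \<longlonglongrightarrow> Q" using tendsto_snd[OF Xx] unfolding x QQ_def by simp
  have PB: "P k \<in> Bo_bar n" "QQ k \<in> Bm_bar n E" for k using XS[of k] unfolding P_def QQ_def by auto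
  have pB: "p \<in> Bo_bar n" "Q \<in> Bm_bar n E" using xS unfolding x by auto
  have pc: "(\<lambda>k. P k i) \<longlonglongrightarrow> p i" for i by (rule tendsto_fun_coord[OF Pp])
  have qc: "(\<lambda>k. QQ k i $ a $ b) \<longlonglongrightarrow> Q i $ a $ b" for i a b
    by (intro tendsto_vec_nth tendsto_fun_coord[OF QQQ])
  have "(\<lambda>k. Qsz n (QQ k)) \<longlonglongrightarrow> Qsz n Q" unfolding Qsz_def by (intro tendsto_intros qc)
  then have "Bseq (\<lambda>k. Qsz n (QQ k))" by (intro convergent_imp_Bseq convergentI)
  then obtain B0 where B0: "\<And>k. Qsz n (QQ k) \<le> B0"
    by (metis BseqE real_norm_def abs_le_D1)
  have "(\<lambda>k. \<Sum>i\<in>{0..n}. \<bar>P k i\<bar>) \<longlonglongrightarrow> (\<Sum>i\<in>{0..n}. \<bar>p i\<bar>)" by (intro tendsto_intros pc)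
  then have "Bseq (\<lambda>k. \<Sum>i\<in>{0..n}. \<bar>P k i\<bar>)" by (intro convergent_imp_Bseq convergentI)
  then obtain K0 where K0: "\<And>k. (\<Sum>i\<in>{0..n}. \<bar>P k i\<bar>) \<le> K0" "K0 > 0"
    by (metis BseqE real_norm_def abs_le_D1)
  define N where "N = CARD('m)"
  define D where "D = max 1 (real (card {p. p permutes (UNIV::'m set)}) * B0 ^ N)"
  have D1: "D \<ge> 1" by (simp add: D_def)
  have Dbound: "Re (det (trig_Q n (QQ k) \<theta>)) \<le> D" for k \<theta>
  proof -
    have nn: "Qsz n (QQ k) \<ge> 0" unfolding Qsz_def by (intro sum_nonneg) auto
    have "Re (det (trig_Q n (QQ k) \<theta>)) \<le> cmod (det (trig_Q n (QQ k) \<theta>))" by (rule complex_Re_le_cmod)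
    also have "\<dots> \<le> real (card {p. p permutes (UNIV::'m set)}) * Qsz n (QQ k) ^ CARD('m)"
      by (rule det_bound) (rule trig_Q_entry_bound)
    also have "\<dots> \<le> real (card {p. p permutes (UNIV::'m set)}) * B0 ^ N"
      unfolding N_def by (intro mult_left_mono power_mono B0 nn) auto
    also have "\<dots> \<le> D" by (simp add: D_def)
    finally show ?thesis .
  qed
  have Abound: "trig_p n (P k) \<theta> \<le> K0" for k \<theta>
    using trig_p_bound[of n "P k" \<theta>] K0(1)[of k] by linarith
  have tA: "(\<lambda>k. trig_p n (P k) \<theta>) \<longlonglongrightarrow> trig_p n p \<theta>" for \<theta> by (rule tendsto_trig_p[OF Pp])
  have tD: "(\<lambda>k. det (trig_Q n (QQ k) \<theta>)) \<longlonglongrightarrow> det (trig_Q n Q \<theta>)" for \<theta> by (rule tendsto_det_trig_Q[OF QQQ])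
  have Dlim: "Re (det (trig_Q n Q \<theta>)) \<le> D" for \<theta>
  proof -
    have "(\<lambda>k. Re (det (trig_Q n (QQ k) \<theta>))) \<longlonglongrightarrow> Re (det (trig_Q n Q \<theta>))" by (intro tendsto_intros tD)
    then show ?thesis using Dbound by (intro LIMSEQ_le_const2) auto
  qed
  have Alim: "trig_p n p \<theta> \<le> K0" for \<theta>
    using tA[of \<theta>] Abound by (intro LIMSEQ_le_const2) auto
  define Cc where "Cc = 2 * real N * sqrt K0 + K0 * ln D + real N * K0"
  have Cc: "Cc \<ge> 0" using D1 K0(2) unfolding Cc_def by (intro add_nonneg_nonneg mult_nonneg_nonneg) auto
  have lowPhi: "- ereal Cc \<le> Phi N a d" if "0 \<le> a" "a \<le> K0" "Im d = 0" "Re d \<ge> 0" "Re d \<le> D" for a d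
  proof -
    have "sqrt a \<le> sqrt K0" using that by simp
    then have "2 * real N * sqrt a \<le> 2 * real N * sqrt K0" by (intro mult_left_mono) auto
    moreover have "a * ln D \<le> K0 * ln D" using that D1 by (intro mult_right_mono) auto
    moreover have "real N * a \<le> real N * K0" using that by (intro mult_left_mono) auto
    ultimately have "- Cc \<le> - 2 * real N * sqrt a - a * ln D - real N * a"
      unfolding Cc_def by linarith
    then have "- ereal Cc \<le> ereal (- 2 * real N * sqrt a - a * ln D - real N * a)" by simp
    also have "\<dots> \<le> Phi N a d" by (rule Phi_lower[OF that(1,3,4,5) D1])
    finally show ?thesis .
  qed
  define u where "u k = (\<lambda>\<theta>. Phi N (trig_p n (P k) \<theta>) (det (trig_Q n (QQ k) \<theta>)))" for k
  define v where "v = (\<lambda>\<theta>. Phi N (trig_p n p \<theta>) (det (trig_Q n Q \<theta>)))"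
  define hu where "hu k = (\<lambda>\<theta>. Psi (trig_p n (P k) \<theta>))" for k
  define hv where "hv = (\<lambda>\<theta>. Psi (trig_p n p \<theta>))"
  have lbu: "- ereal Cc \<le> u k \<theta>" if "\<theta> \<in> II" for k \<theta>
    unfolding u_def using Bo_bar_nonneg[OF PB(1) that] Abound Bm_bar_det[OF PB(2) that] Dbound
    by (intro lowPhi) auto
  have lbv: "- ereal Cc \<le> v \<theta>" if "\<theta> \<in> II" for \<theta>
    unfolding v_def using Bo_bar_nonneg[OF pB(1) that] Alim Bm_bar_det[OF pB(2) that] Dlim
    by (intro lowPhi) auto
  have Fu: "intT v \<le> liminf (\<lambda>k. intT (u k))"
  proof (rule intT_fatou[OF _ Cc lbu _ lbv])
    show "u k \<in> borel_measurable lborel" for k unfolding u_def by (rule meas_Phi)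
    show "v \<in> borel_measurable lborel" unfolding v_def by (rule meas_Phi)
    fix \<theta> assume th: "\<theta> \<in> II"
    show "v \<theta> \<le> liminf (\<lambda>k. u k \<theta>)" unfolding u_def v_def
      using Bo_bar_nonneg[OF PB(1) th] Bm_bar_det[OF PB(2) th] Dbound D1
        Bo_bar_nonneg[OF pB(1) th] Bm_bar_det[OF pB(2) th]
      by (intro Phi_lsc[OF tA tD]) auto
  qed
  have Psi_nn: "- ereal 0 \<le> Psi a" "ereal 0 \<le> Psi a" "0 \<le> Psi a" for a by (simp_all add: Psi_def)
  have Fh: "intT hv \<le> liminf (\<lambda>k. intT (hu k))"
  proof (rule intT_fatou[where C=0])
    show "hu k \<in> borel_measurable lborel" for k unfolding hu_def by (rule meas_Psi)
    show "hv \<in> borel_measurable lborel" unfolding hv_def by (rule meas_Psi)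
    fix \<theta> assume th: "\<theta> \<in> II"
    show "hv \<theta> \<le> liminf (\<lambda>k. hu k \<theta>)" unfolding hu_def hv_def
      using Bo_bar_nonneg[OF PB(1) th] Bo_bar_nonneg[OF pB(1) th]
      by (intro Psi_lsc[OF tA]) auto
  qed (auto simp: hu_def hv_def Psi_nn)
  have lowu: "- ereal Cc \<le> intT (u k)" for k
    by (rule intT_lower[OF _ Cc lbu]) (unfold u_def, rule meas_Phi)
  have lowh: "0 \<le> intT (hu k)" for k
  proof -
    have "- ereal 0 \<le> intT (hu k)" by (rule intT_lower[OF _ order_refl]) (auto simp: hu_def meas_Psi[simplified] Psi_nn)
    then show ?thesis by (simp add: zero_ereal_def)
  qed
  define L where "L q QQ' = (\<Sum>i\<in>{0..n}. trace (transpose (QQ' i) ** R i)) - (\<Sum>i\<in>{0..n}. q i * c i)"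
    for q :: "nat \<Rightarrow> real" and QQ' :: "nat \<Rightarrow> real^'m^'m"
  have tL: "(\<lambda>k. ereal (L (P k) (QQ k))) \<longlonglongrightarrow> ereal (L p Q)"
    unfolding L_def trace_def matrix_matrix_mult_def transpose_def
    by (simp only: vec_lambda_beta) (intro tendsto_intros pc qc)
  have Jeq: "J_tilde n R c lam (q, QQ') =
      (intT (\<lambda>\<theta>. Phi N (trig_p n q \<theta>) (det (trig_Q n QQ' \<theta>))) + ereal (L q QQ'))
       + ereal lam * intT (\<lambda>\<theta>. Psi (trig_p n q \<theta>))" for q QQ'
  proof -
    have "J_integrand n q QQ' = (\<lambda>\<theta>. Phi N (trig_p n q \<theta>) (det (trig_Q n QQ' \<theta>)))"
      by (simp add: fun_eq_iff J_integrand_Phi N_def)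
    then show ?thesis unfolding J_tilde_def J_fun_def g_fun_def g_Psi L_def
      by (simp add: ereal_add_sub)
  qed
  have JX: "J_tilde n R c lam (X k) = (intT (u k) + ereal (L (P k) (QQ k))) + ereal lam * intT (hu k)" for k
    using Jeq[of "P k" "QQ k"] unfolding u_def hu_def P_def QQ_def by simp
  have Jx: "J_tilde n R c lam x = (intT v + ereal (L p Q)) + ereal lam * intT hv"
    using Jeq[of p Q] unfolding v_def hv_def x by simp
  have limL: "liminf (\<lambda>k. ereal (L (P k) (QQ k))) = ereal (L p Q)"
    by (rule lim_imp_Liminf[OF trivial_limit_sequentially tL])
  have liu: "- ereal Cc \<le> liminf (\<lambda>k. intT (u k))" using lowu by (intro Liminf_bounded) auto
  have lih: "0 \<le> liminf (\<lambda>k. intT (hu k))" using lowh by (intro Liminf_bounded) auto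
  have lam: "lam \<ge> 0" using assms by simp
  have a1: "liminf (\<lambda>k. intT (u k)) + liminf (\<lambda>k. ereal (L (P k) (QQ k)))
      \<le> liminf (\<lambda>k. intT (u k) + ereal (L (P k) (QQ k)))"
    using ereal_liminf_add_mono[of "\<lambda>k. intT (u k)" "\<lambda>k. ereal (L (P k) (QQ k))"] unfolding limL by simp
  have liu2: "- ereal Cc + ereal (L p Q) \<le> liminf (\<lambda>k. intT (u k) + ereal (L (P k) (QQ k)))"
    using a1 liu unfolding limL by (meson add_right_mono order_trans)
  have limlam: "liminf (\<lambda>k. ereal lam * intT (hu k)) = ereal lam * liminf (\<lambda>k. intT (hu k))"
    by (rule Liminf_ereal_mult_left) (use lam in auto)
  have lih2: "0 \<le> liminf (\<lambda>k. ereal lam * intT (hu k))" unfolding limlam using lih lam by simp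
  have a2: "liminf (\<lambda>k. intT (u k) + ereal (L (P k) (QQ k))) + liminf (\<lambda>k. ereal lam * intT (hu k))
      \<le> liminf (\<lambda>k. (intT (u k) + ereal (L (P k) (QQ k))) + ereal lam * intT (hu k))"
    using liu2 lih2 by (intro ereal_liminf_add_mono) auto
  have "J_tilde n R c lam x \<le> (liminf (\<lambda>k. intT (u k)) + liminf (\<lambda>k. ereal (L (P k) (QQ k))))
       + liminf (\<lambda>k. ereal lam * intT (hu k))"
    unfolding Jx limL limlam using Fu Fh lam by (intro add_mono ereal_mult_left_mono) auto
  also have "\<dots> \<le> liminf (\<lambda>k. intT (u k) + ereal (L (P k) (QQ k))) + liminf (\<lambda>k. ereal lam * intT (hu k))"
    using a1 by (rule add_right_mono)
  also have "\<dots> \<le> liminf (\<lambda>k. J_tilde n R c lam (X k))" unfolding JX using a2 .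
  finally show "J_tilde n R c lam x \<le> liminf (\<lambda>k. J_tilde n R c lam (X k))" .
qed

end
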